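(* Let $P$ be the uniform probability measure on $[0,1]$, $Q$ a probability measure on $[0,1]$ with unimodal density $r = dQ/dP$, maximiser $x^*$ and $r_{max} = \sup r<\infty$. For $\gamma\in[0,1]$ let $N(\gamma) = \min\{n : X_n \in S(\gamma)\}$ where $X_1,X_2,\dots$ are the samples of AS*. Then $$\mathbb{E}[N(\gamma)] \le \alpha\log\frac{1}{w(\gamma)} + 6, \qquad \alpha = \left(\log\tfrac43\right)^{-1}.$$
   Context: Unimodal: $r$ non-decreasing on $[0,x^*]$, non-increasing on $[x^*,1]$, $r(x^* ) = r_{max}$. $S(\gamma) = \{x\in[0,1] : r(x)\ge\gamma r_{max}\}$ and $w(\gamma) = \inf\{\delta\in[0,1] : \exists z\in[0,1],\ S(\gamma)\subseteq[z,z+\delta]\}$. $\mathrm{TG}(\mu,\kappa)$ is the unit-scale Gumbel with location $\mu$ truncated to $(-\infty,\kappa]$ (density $\propto \exp(-(g-\mu)-e^{-(g-\mu)})$ on $g\le\kappa$). AS*: $B_1=[0,1]$, $G_0=+\infty$; for every $n\ge1$ draw $G_n\sim\mathrm{TG}(\log P(B_n),G_{n-1})$ and independently $X_n\sim P(\cdot\cap B_n)/P(B_n)$; set $L_n=\max_{k\le n}(\log r(X_k)+G_k)$, $U_n=\log r_{max}+G_n$, and $B_{n+1}=[\max(\{0\}\cup\{X_k:k\le n,X_k\le x^*\}),\ \min(\{1\}\cup\{X_k:k\le n,X_k\ge x^*\})]$. These sequences are defined for all $n$; the algorithm's number of steps is $T=\min\{n\ge1: L_n\ge U_n\}$. *)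

theory Defs
  imports "HOL-Probability.Probability"
begin

definition unifP :: "real measure" where
  "unifP = uniform_measure lborel {0..1}"

definition Sset :: "(real \<Rightarrow> real) \<Rightarrow> real \<Rightarrow> real \<Rightarrow> real set" where
  "Sset r rmax \<gamma> = {x \<in> {0..1}. r x \<ge> \<gamma> * rmax}"

definition width :: "(real \<Rightarrow> real) \<Rightarrow> real \<Rightarrow> real \<Rightarrow> real" where
  "width r rmax \<gamma> = Inf {\<delta> \<in> {0..1}. \<exists>z \<in> {0..1}. Sset r rmax \<gamma> \<subseteq> {z..z+\<delta>}}"

text \<open>Current bracket B_{n+1} = [lo, hi] computed from the previous samples X_1..X_n.\<close>
definition lo_br :: "real \<Rightarrow> real list \<Rightarrow> real" where
  "lo_br xs hist = Max (insert 0 {x \<in> set hist. x \<le> xs})"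

definition hi_br :: "real \<Rightarrow> real list \<Rightarrow> real" where
  "hi_br xs hist = Min (insert 1 {x \<in> set hist. x \<ge> xs})"

text \<open>Samples of AS*: with u :: nat => real an i.i.d. Uniform[0,1] sequence,
  X_n = lo(B_n) + (hi(B_n) - lo(B_n)) * u n, which is distributed as P(. \<inter> B_n)/P(B_n).
  AS_hist xs u n = [X_1, ..., X_n].\<close>
fun AS_hist :: "real \<Rightarrow> (nat \<Rightarrow> real) \<Rightarrow> nat \<Rightarrow> real list" where
  "AS_hist xs u 0 = []"
| "AS_hist xs u (Suc n) =
     (let h = AS_hist xs u n
      in h @ [lo_br xs h + (hi_br xs h - lo_br xs h) * u (Suc n)])"

definition AS_X :: "real \<Rightarrow> (nat \<Rightarrow> real) \<Rightarrow> nat \<Rightarrow> real" where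
  "AS_X xs u n = AS_hist xs u n ! (n - 1)"   \<comment> \<open>meaningful for n \<ge> 1\<close>

definition AS_space :: "(nat \<Rightarrow> real) measure" where
  "AS_space = PiM UNIV (\<lambda>_. unifP)"

definition Nhit :: "real \<Rightarrow> real set \<Rightarrow> (nat \<Rightarrow> real) \<Rightarrow> ennreal" where
  "Nhit xs S u = (if \<exists>n\<ge>1. AS_X xs u n \<in> S
                  then of_nat (LEAST n. n \<ge> 1 \<and> AS_X xs u n \<in> S) else \<infinity>)"

end

theory Submission
  imports Defs
begin


definition stp :: "real \<Rightarrow> real \<times> real \<Rightarrow> real \<Rightarrow> real \<times> real" where
  "stp xs p t = (if fst p + (snd p - fst p) * t \<le> xs then max (fst p) (fst p + (snd p - fst p) * t) else fst p,
                 if fst p + (snd p - fst p) * t \<ge> xs then min (snd p) (fst p + (snd p - fst p) * t) else snd p)"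

fun brk :: "real \<Rightarrow> real \<times> real \<Rightarrow> (nat \<Rightarrow> real) \<Rightarrow> nat \<Rightarrow> real \<times> real" where
  "brk xs st v 0 = st"
| "brk xs st v (Suc n) = stp xs (brk xs st v n) (v n)"

definition smp :: "real \<Rightarrow> real \<times> real \<Rightarrow> (nat \<Rightarrow> real) \<Rightarrow> nat \<Rightarrow> real" where
  "smp xs st v n = fst (brk xs st v n) + (snd (brk xs st v n) - fst (brk xs st v n)) * v n"

definition Tk :: "real \<Rightarrow> real set \<Rightarrow> nat \<Rightarrow> real \<times> real \<Rightarrow> (nat \<Rightarrow> real) \<Rightarrow> nat" where
  "Tk xs SS k st v = (\<Sum>n<k. if (\<forall>m<n. smp xs st v m \<notin> SS) then 1 else 0)"

lemma brk_shift: "brk xs st v (Suc n) = brk xs (stp xs st (v 0)) (\<lambda>i. v (Suc i)) n"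
  by (induction n) auto

lemma smp_shift: "smp xs st v (Suc n) = smp xs (stp xs st (v 0)) (\<lambda>i. v (Suc i)) n"
  unfolding smp_def brk_shift by simp

lemma Tk_Suc: "Tk xs SS (Suc k) st v =
   1 + (if smp xs st v 0 \<in> SS then 0 else Tk xs SS k (stp xs st (v 0)) (\<lambda>i. v (Suc i)))"
proof -
  have "Tk xs SS (Suc k) st v = 1 + (\<Sum>n<k. if (\<forall>m<Suc n. smp xs st v m \<notin> SS) then 1 else 0)"
    unfolding Tk_def by (subst sum.lessThan_Suc_shift) simp
  also have "(\<lambda>n. (\<forall>m<Suc n. smp xs st v m \<notin> SS)) =
      (\<lambda>n. smp xs st v 0 \<notin> SS \<and> (\<forall>m<n. smp xs (stp xs st (v 0)) (\<lambda>i. v (Suc i)) m \<notin> SS))"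
    by (auto simp: All_less_Suc2 smp_shift)
  finally show ?thesis by (auto simp: Tk_def)
qed

lemma Tk_mono: "Tk xs SS k st v \<le> Tk xs SS (Suc k) st v"
  unfolding Tk_def by simp

lemma Tk_full: "(\<And>j. Suc j < k \<Longrightarrow> smp xs st v j \<notin> SS) \<Longrightarrow> Tk xs SS k st v = k"
  unfolding Tk_def
proof -
  assume h: "\<And>j. Suc j < k \<Longrightarrow> smp xs st v j \<notin> SS"
  have "(\<Sum>n<k. if (\<forall>m<n. smp xs st v m \<notin> SS) then 1 else 0) = (\<Sum>n<k. (1::nat))"
    by (intro sum.cong refl) (auto intro!: h)
  then show "(\<Sum>n<k. if (\<forall>m<n. smp xs st v m \<notin> SS) then 1 else 0) = k" by simp
qed

lemma lo_br_snoc: "lo_br xs (h @ [y]) = (if y \<le> xs then max (lo_br xs h) y else lo_br xs h)"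
proof -
  have fin: "finite (insert 0 {x \<in> set h. x \<le> xs})" by simp
  show ?thesis
  proof (cases "y \<le> xs")
    case True
    then have "insert 0 {x \<in> set (h @ [y]). x \<le> xs} = insert y (insert 0 {x \<in> set h. x \<le> xs})" by auto
    then show ?thesis using True fin unfolding lo_br_def by (simp add: Max_insert max.commute)
  next
    case False
    then have "{x \<in> set (h @ [y]). x \<le> xs} = {x \<in> set h. x \<le> xs}" by auto
    then show ?thesis using False unfolding lo_br_def by simp
  qed
qed

lemma hi_br_snoc: "hi_br xs (h @ [y]) = (if y \<ge> xs then min (hi_br xs h) y else hi_br xs h)"
proof -
  have fin: "finite (insert 1 {x \<in> set h. x \<ge> xs})" by simp
  show ?thesis
  proof (cases "y \<ge> xs")
    case True
    then have "insert 1 {x \<in> set (h @ [y]). x \<ge> xs} = insert y (insert 1 {x \<in> set h. x \<ge> xs})" by auto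
    then show ?thesis using True fin unfolding hi_br_def by (simp add: Min_insert min.commute)
  next
    case False
    then have "{x \<in> set (h @ [y]). x \<ge> xs} = {x \<in> set h. x \<ge> xs}" by auto
    then show ?thesis using False unfolding hi_br_def by simp
  qed
qed

lemma hist_len: "length (AS_hist xs u n) = n"
  by (induction n) (auto simp: Let_def)

lemma hist_brk: "lo_br xs (AS_hist xs u n) = fst (brk xs (0,1) (\<lambda>i. u (Suc i)) n) \<and>
                 hi_br xs (AS_hist xs u n) = snd (brk xs (0,1) (\<lambda>i. u (Suc i)) n)"
proof (induction n)
  case 0
  then show ?case by (simp add: lo_br_def hi_br_def)
next
  case (Suc n)
  then show ?case
    by (simp add: Let_def lo_br_snoc hi_br_snoc stp_def max.commute min.commute)
qed

lemma AS_X_smp: "AS_X xs u (Suc n) = smp xs (0,1) (\<lambda>i. u (Suc i)) n"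
  using hist_brk[of xs u n] hist_len[of xs u n]
  by (simp add: AS_X_def Let_def smp_def nth_append)



lemma sets_unifP: "sets unifP = sets borel"
  by (simp add: unifP_def)

lemma space_unifP[simp]: "space unifP = UNIV"
  by (simp add: unifP_def)

lemma prob_unifP: "prob_space unifP"
  unfolding unifP_def by (rule prob_space_uniform_measure) auto

lemma comp_meas[measurable]: "(\<lambda>v. v n) \<in> borel_measurable AS_space"
proof -
  have "(\<lambda>v. v n) \<in> measurable AS_space unifP"
    unfolding AS_space_def by (rule measurable_component_singleton) simp
  then show ?thesis using measurable_cong_sets[OF refl sets_unifP] by blast
qed

lemma stp_fst: "fst (stp xs p t) = (if fst p + (snd p - fst p) * t \<le> xs then max (fst p) (fst p + (snd p - fst p) * t) else fst p)"
  by (simp add: stp_def)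
lemma stp_snd: "snd (stp xs p t) = (if fst p + (snd p - fst p) * t \<ge> xs then min (snd p) (fst p + (snd p - fst p) * t) else snd p)"
  by (simp add: stp_def)

lemma brk_meas: "(\<lambda>v. fst (brk xs st v n)) \<in> borel_measurable AS_space \<and>
                 (\<lambda>v. snd (brk xs st v n)) \<in> borel_measurable AS_space"
proof (induction n)
  case 0
  then show ?case by simp
next
  case (Suc n)
  then have [measurable]: "(\<lambda>v. fst (brk xs st v n)) \<in> borel_measurable AS_space"
     "(\<lambda>v. snd (brk xs st v n)) \<in> borel_measurable AS_space" by auto
  have "(\<lambda>v. fst (brk xs st v (Suc n))) = (\<lambda>v. if fst (brk xs st v n) + (snd (brk xs st v n) - fst (brk xs st v n)) * v n \<le> xs then max (fst (brk xs st v n)) (fst (brk xs st v n) + (snd (brk xs st v n) - fst (brk xs st v n)) * v n) else fst (brk xs st v n))"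
    by (simp add: stp_fst)
  moreover have "(\<lambda>v. snd (brk xs st v (Suc n))) = (\<lambda>v. if fst (brk xs st v n) + (snd (brk xs st v n) - fst (brk xs st v n)) * v n \<ge> xs then min (snd (brk xs st v n)) (fst (brk xs st v n) + (snd (brk xs st v n) - fst (brk xs st v n)) * v n) else snd (brk xs st v n))"
    by (simp add: stp_snd)
  ultimately show ?case by simp
qed


lemma smp_meas[measurable]: "(\<lambda>v. smp xs st v n) \<in> borel_measurable AS_space"
proof -
  note [measurable] = brk_meas[THEN conjunct1] brk_meas[THEN conjunct2]
  show ?thesis unfolding smp_def by measurable
qed

lemma Tk_meas_enn[measurable]:
  assumes SS[measurable]: "SS \<in> sets borel"
  shows "(\<lambda>v. ennreal (real (Tk xs SS k st v))) \<in> borel_measurable AS_space"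
proof -
  have "(\<lambda>v. ennreal (real (Tk xs SS k st v))) = (\<lambda>v. \<Sum>n<k. ennreal (if (\<forall>m<n. smp xs st v m \<notin> SS) then 1 else 0))"
  proof
    fix v
    have "ennreal (real (Tk xs SS k st v)) = ennreal (\<Sum>n<k. (if (\<forall>m<n. smp xs st v m \<notin> SS) then 1 else 0))"
      unfolding Tk_def by (auto simp: of_nat_sum intro!: arg_cong[where f=ennreal] sum.cong)
    also have "\<dots> = (\<Sum>n<k. ennreal (if (\<forall>m<n. smp xs st v m \<notin> SS) then 1 else 0))"
      by (rule sum_ennreal[symmetric]) simp
    finally show "ennreal (real (Tk xs SS k st v)) = (\<Sum>n<k. ennreal (if (\<forall>m<n. smp xs st v m \<notin> SS) then 1 else 0))" .
  qed
  moreover have "(\<lambda>v. \<Sum>n<k. ennreal (if (\<forall>m<n. smp xs st v m \<notin> SS) then 1 else 0)) \<in> borel_measurable AS_space"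
    by measurable
  ultimately show ?thesis by simp
qed

lemma prob_AS: "prob_space AS_space"
  unfolding AS_space_def
  by (intro prob_space_PiM prob_unifP)

lemma split_AS:
  assumes f[measurable]: "f \<in> borel_measurable AS_space"
  shows "(\<integral>\<^sup>+ v. f v \<partial>AS_space) = (\<integral>\<^sup>+ s. \<integral>\<^sup>+ \<omega>. f (case_nat s \<omega>) \<partial>AS_space \<partial>unifP)"
proof -
  interpret U: prob_space unifP by (rule prob_unifP)
  interpret sequence_space unifP by unfold_locales
  interpret PA: prob_space AS_space by (rule prob_AS)
  interpret PS: pair_sigma_finite unifP AS_space by unfold_locales
  have e: "AS_space = S" by (simp add: AS_space_def)
  have g: "(\<lambda>(s, \<omega>). case_nat s \<omega>) \<in> measurable (unifP \<Otimes>\<^sub>M S) S"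
    by measurable
  have "(\<integral>\<^sup>+ v. f v \<partial>AS_space) = (\<integral>\<^sup>+ v. f v \<partial>distr (unifP \<Otimes>\<^sub>M S) S (\<lambda>(s, \<omega>). case_nat s \<omega>))"
    by (simp add: PiM_iter e)
  also have "\<dots> = (\<integral>\<^sup>+ x. f ((\<lambda>(s, \<omega>). case_nat s \<omega>) x) \<partial>(unifP \<Otimes>\<^sub>M S))"
    by (rule nn_integral_distr[OF g]) (simp add: e[symmetric])
  also have "\<dots> = (\<integral>\<^sup>+ s. \<integral>\<^sup>+ \<omega>. f (case_nat s \<omega>) \<partial>AS_space \<partial>unifP)"
  proof -
    have m: "(\<lambda>x. f ((\<lambda>(s, \<omega>). case_nat s \<omega>) x)) \<in> borel_measurable (unifP \<Otimes>\<^sub>M AS_space)"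
      using measurable_comp[OF g, of f borel] f e by (simp add: comp_def)
    show ?thesis using PA.nn_integral_fst[OF m] by (simp add: e split_beta')
  qed
  finally show ?thesis .
qed



lemma ln_bound:
  fixes t :: real assumes "0 \<le> t" "t < 1"
  shows "ln (1 - t) \<le> - t - t\<^sup>2 / 2"
proof -
  let ?f = "\<lambda>x::real. ln (1 - x) + x + x\<^sup>2 / 2"
  have "?f t \<le> ?f 0"
  proof (rule deriv_nonpos_imp_antimono[where g = "\<lambda>x::real. ln (1 - x) + x + x\<^sup>2 / 2" and g' = "\<lambda>x. - 1 / (1 - x) + 1 + x" and a = 0 and b = t])
    fix x assume x: "x \<in> {0..t}"
    then have x1: "x < 1" using assms by auto
    show "DERIV ?f x :> (- 1 / (1 - x) + 1 + x)"
      using x1 by (auto intro!: derivative_eq_intros simp: power2_eq_square field_simps)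
    have "- 1 / (1 - x) + 1 + x = - (x\<^sup>2) / (1 - x)" using x1 by (simp add: field_simps power2_eq_square)
    also have "\<dots> \<le> 0" using x1 by (intro divide_nonpos_pos) auto
    finally show "- 1 / (1 - x) + 1 + x \<le> 0" .
  qed (use assms in auto)
  then show ?thesis by simp
qed

lemma alpha_bound: "24 / 7 \<le> 1 / ln (4 / 3 :: real)"
proof -
  have "1 + 7/24 + (7/24)\<^sup>2 / 2 \<le> exp (7/24 :: real)"
    by (rule exp_lower_Taylor_quadratic) simp
  then have "4/3 \<le> exp (7/24 :: real)" by (simp add: power2_eq_square)
  then have "ln (4/3) \<le> ln (exp (7/24 :: real))" by (subst ln_le_cancel_iff) auto
  then have l: "ln (4/3) \<le> (7/24 :: real)" by simp
  have "0 < ln (4/3 :: real)" by simp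
  then show ?thesis using l by (simp add: field_simps)
qed

lemma poly_ineq:
  fixes A B \<delta> :: real
  assumes "0 \<le> A" "0 \<le> B" "A + B = 1 - \<delta>" "0 < \<delta>"
  shows "1 \<le> 6 * \<delta> + (24/7) * ((A\<^sup>2/2 + A^3/6) + (B\<^sup>2/2 + B^3/6))"
proof -
  let ?e = "1 - \<delta>"
  have e0: "0 \<le> ?e" using assms by linarith
  have e1: "?e \<le> 1" using assms by linarith
  have eAB: "?e = A + B" using assms by simp
  have s2: "A\<^sup>2 + B\<^sup>2 \<ge> ?e\<^sup>2 / 2"
  proof -
    have "0 \<le> (A - B)\<^sup>2" by simp
    then show ?thesis unfolding eAB by (simp add: power2_eq_square algebra_simps)
  qed
  have s3: "A^3 + B^3 \<ge> ?e^3 / 4"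
  proof -
    have "0 \<le> (A + B) * (A - B)\<^sup>2" using assms by simp
    then show ?thesis unfolding eAB by (simp add: power2_eq_square power3_eq_cube algebra_simps)
  qed
  have "(24/7) * ((A\<^sup>2/2 + A^3/6) + (B\<^sup>2/2 + B^3/6)) = (12/7) * (A\<^sup>2 + B\<^sup>2) + (4/7) * (A^3 + B^3)"
    by (simp add: algebra_simps)
  also have "\<dots> \<ge> (12/7) * (?e\<^sup>2/2) + (4/7) * (?e^3/4)"
    using s2 s3 by (intro add_mono mult_left_mono) auto
  finally have h: "(24/7) * ((A\<^sup>2/2 + A^3/6) + (B\<^sup>2/2 + B^3/6)) \<ge> (6/7) * ?e\<^sup>2 + (1/7) * ?e^3" by simp
  obtain e where e: "e = ?e" by blast
  have "0 \<le> (1 - e) * (35 - 7 * e - e\<^sup>2)"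
  proof (rule mult_nonneg_nonneg)
    show "0 \<le> 1 - e" using e1 e by simp
    have "e\<^sup>2 \<le> 1" using e0 e1 e by (simp add: power_le_one)
    then show "0 \<le> 35 - 7 * e - e\<^sup>2" using e1 e by linarith
  qed
  then have "0 \<le> 35 - 42 * e + 6 * e\<^sup>2 + e^3"
    by (simp add: power2_eq_square power3_eq_cube algebra_simps)
  then have "0 \<le> 35 - 42 * ?e + 6 * ?e\<^sup>2 + ?e^3" using e by simp
  then show ?thesis using h by (simp add: algebra_simps)
qed

lemma G_int:
  fixes A B C \<alpha> :: real
  assumes A: "0 \<le> A" "A \<le> 1" and B: "0 \<le> B" "B \<le> 1" and al: "0 \<le> \<alpha>"
    and nn1: "\<And>t. t \<in> {0..A} \<Longrightarrow> 0 \<le> C - \<alpha> * (t + t\<^sup>2/2)"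
    and nn2: "\<And>t. t \<in> {1-B..1} \<Longrightarrow> 0 \<le> C - \<alpha> * ((1-t) + (1-t)\<^sup>2/2)"
  shows "(\<integral>\<^sup>+ t. ennreal (1 + indicator {0..A} t * (C - \<alpha> * (t + t\<^sup>2/2))
                        + indicator {1-B..1} t * (C - \<alpha> * ((1-t) + (1-t)\<^sup>2/2))) \<partial>unifP)
         = ennreal (1 + (A*C - \<alpha>*(A\<^sup>2/2 + A^3/6)) + (B*C - \<alpha>*(B\<^sup>2/2 + B^3/6)))"
proof -
  define f1 where "f1 t = C - \<alpha> * (t + t\<^sup>2/2)" for t :: real
  define f2 where "f2 t = C - \<alpha> * ((1-t) + (1-t)\<^sup>2/2)" for t :: real
  define G where "G t = 1 + indicator {0..A} t * f1 t + indicator {1-B..1} t * f2 t" for t :: real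
  have [measurable]: "f1 \<in> borel_measurable borel" "f2 \<in> borel_measurable borel"
    unfolding f1_def[abs_def] f2_def[abs_def] by measurable
  have Gm0: "(\<lambda>t. ennreal (G t)) \<in> borel_measurable borel"
    unfolding G_def by measurable
  have Gm[measurable]: "(\<lambda>t. ennreal (G t)) \<in> borel_measurable lborel"
    using Gm0 by simp
  have "(\<integral>\<^sup>+ t. ennreal (G t) \<partial>unifP) = (\<integral>\<^sup>+ t. ennreal (G t) * indicator {0..1::real} t \<partial>lborel) / emeasure lborel {0..1::real}"
    unfolding unifP_def by (rule nn_integral_uniform_measure) auto
  also have "emeasure lborel {0..1::real} = 1" by simp
  also have "(\<lambda>t. ennreal (G t) * indicator {0..1::real} t) =
      (\<lambda>t. indicator {0..1::real} t + (ennreal (f1 t) * indicator {0..A} t + ennreal (f2 t) * indicator {1-B..1} t))"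
  proof
    fix t :: real
    show "ennreal (G t) * indicator {0..1::real} t = indicator {0..1::real} t + (ennreal (f1 t) * indicator {0..A} t + ennreal (f2 t) * indicator {1-B..1} t)"
    proof (cases "t \<in> {0..1}")
      case True
      have a: "0 \<le> indicator {0..A} t * f1 t" using nn1 by (auto simp: indicator_def f1_def)
      have b: "0 \<le> indicator {1-B..1} t * f2 t" using nn2 by (auto simp: indicator_def f2_def)
      have "ennreal (G t) = ennreal 1 + (ennreal (indicator {0..A} t * f1 t) + ennreal (indicator {1-B..1} t * f2 t))"
        unfolding G_def using a b by (simp add: ennreal_plus add.assoc)
      also have "ennreal (indicator {0..A} t * f1 t) = ennreal (f1 t) * indicator {0..A} t"
        by (auto simp: indicator_def)
      also have "ennreal (indicator {1-B..1} t * f2 t) = ennreal (f2 t) * indicator {1-B..1} t"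
        by (auto simp: indicator_def)
      finally show ?thesis using True by simp
    next
      case False
      then have "t \<notin> {0..A}" "t \<notin> {1-B..1}" using A B by auto
      then show ?thesis using False by simp
    qed
  qed
  also have "(\<integral>\<^sup>+ t. indicator {0..1::real} t + (ennreal (f1 t) * indicator {0..A} t + ennreal (f2 t) * indicator {1-B..1} t) \<partial>lborel)
      = (\<integral>\<^sup>+ t. indicator {0..1::real} t \<partial>lborel) + ((\<integral>\<^sup>+ t. ennreal (f1 t) * indicator {0..A} t \<partial>lborel) + (\<integral>\<^sup>+ t. ennreal (f2 t) * indicator {1-B..1} t \<partial>lborel))"
  proof -
    have m0: "(\<lambda>t. indicator {0..1::real} t :: ennreal) \<in> borel_measurable lborel" by simp
    have m1': "(\<lambda>t. ennreal (f1 t) * indicator {0..A} t) \<in> borel_measurable borel" by measurable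
    have m2': "(\<lambda>t. ennreal (f2 t) * indicator {1-B..1} t) \<in> borel_measurable borel" by measurable
    have m1: "(\<lambda>t. ennreal (f1 t) * indicator {0..A} t) \<in> borel_measurable lborel" using m1' by simp
    have m2: "(\<lambda>t. ennreal (f2 t) * indicator {1-B..1} t) \<in> borel_measurable lborel" using m2' by simp
    have m12: "(\<lambda>t. ennreal (f1 t) * indicator {0..A} t + ennreal (f2 t) * indicator {1-B..1} t) \<in> borel_measurable lborel"
      using m1 m2 by (rule borel_measurable_add)
    show ?thesis
      by (simp only: nn_integral_add[OF m0 m12] nn_integral_add[OF m1 m2])
  qed
  finally have eq0: "(\<integral>\<^sup>+ t. ennreal (G t) \<partial>unifP) = (\<integral>\<^sup>+ t. indicator {0..1::real} t \<partial>lborel) + ((\<integral>\<^sup>+ t. ennreal (f1 t) * indicator {0..A} t \<partial>lborel) + (\<integral>\<^sup>+ t. ennreal (f2 t) * indicator {1-B..1} t \<partial>lborel))"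
    by (simp only: divide_ennreal_def ennreal_inverse_1 mult_1_right)
  have i0: "(\<integral>\<^sup>+ t. indicator {0..1::real} t \<partial>lborel) = (1::ennreal)"
    by (subst nn_integral_indicator) auto
  have i1: "(\<integral>\<^sup>+ t. ennreal (f1 t) * indicator {0..A} t \<partial>lborel) = (\<lambda>t. C*t - \<alpha>*(t\<^sup>2/2 + t^3/6)) A - (\<lambda>t. C*t - \<alpha>*(t\<^sup>2/2 + t^3/6)) 0"
  proof (rule nn_integral_FTC_Icc)
    show "f1 \<in> borel_measurable borel" by measurable
    show "\<And>x. x \<in> {0..A} \<Longrightarrow> 0 \<le> f1 x" using nn1 by (simp add: f1_def)
    show "0 \<le> A" using A by simp
    show "\<And>x. x \<in> {0..A} \<Longrightarrow> DERIV (\<lambda>t. C*t - \<alpha>*(t\<^sup>2/2 + t^3/6)) x :> f1 x"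
      by (auto intro!: derivative_eq_intros simp: f1_def power2_eq_square field_simps)
  qed
  have i2: "(\<integral>\<^sup>+ t. ennreal (f2 t) * indicator {1-B..1} t \<partial>lborel) = (\<lambda>t. C*t + \<alpha>*((1-t)\<^sup>2/2 + (1-t)^3/6)) 1 - (\<lambda>t. C*t + \<alpha>*((1-t)\<^sup>2/2 + (1-t)^3/6)) (1-B)"
  proof (rule nn_integral_FTC_Icc)
    show "f2 \<in> borel_measurable borel" by measurable
    show "\<And>x. x \<in> {1-B..1} \<Longrightarrow> 0 \<le> f2 x" using nn2 by (simp add: f2_def)
    show "1 - B \<le> 1" using B by simp
    show "\<And>x. x \<in> {1-B..1} \<Longrightarrow> DERIV (\<lambda>t. C*t + \<alpha>*((1-t)\<^sup>2/2 + (1-t)^3/6)) x :> f2 x"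
      by (auto intro!: derivative_eq_intros simp: f2_def power2_eq_square field_simps)
  qed
  have r1: "(\<lambda>t. C*t - \<alpha>*(t\<^sup>2/2 + t^3/6)) A - (\<lambda>t. C*t - \<alpha>*(t\<^sup>2/2 + t^3/6)) 0 = A*C - \<alpha>*(A\<^sup>2/2 + A^3/6)"
    by simp
  have r2: "(\<lambda>t. C*t + \<alpha>*((1-t)\<^sup>2/2 + (1-t)^3/6)) 1 - (\<lambda>t. C*t + \<alpha>*((1-t)\<^sup>2/2 + (1-t)^3/6)) (1-B) = B*C - \<alpha>*(B\<^sup>2/2 + B^3/6)"
    by (simp add: algebra_simps)
  have eq: "(\<integral>\<^sup>+ t. ennreal (G t) \<partial>unifP) = 1 + (ennreal (A*C - \<alpha>*(A\<^sup>2/2 + A^3/6)) + ennreal (B*C - \<alpha>*(B\<^sup>2/2 + B^3/6)))"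
    using eq0 unfolding i0 i1 i2 r1 r2 .
  have CA: "\<alpha> * (A + A\<^sup>2/2) \<le> C" using nn1[of A] A by simp
  have CB: "\<alpha> * (B + B\<^sup>2/2) \<le> C" using nn2[of "1-B"] B by simp
  have p1: "0 \<le> A*C - \<alpha>*(A\<^sup>2/2 + A^3/6)"
  proof -
    have "\<alpha>*(A\<^sup>2/2 + A^3/6) \<le> A * (\<alpha> * (A + A\<^sup>2/2))"
    proof -
      have "0 \<le> A*(A*\<alpha>)" "0 \<le> A*(A*(A*\<alpha>))" using A al by (simp_all add: mult_nonneg_nonneg)
      then show ?thesis by (simp add: power2_eq_square power3_eq_cube algebra_simps)
    qed
    also have "\<dots> \<le> A * C" using CA A by (intro mult_left_mono) auto
    finally show ?thesis by simp
  qed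
  have p2: "0 \<le> B*C - \<alpha>*(B\<^sup>2/2 + B^3/6)"
  proof -
    have "\<alpha>*(B\<^sup>2/2 + B^3/6) \<le> B * (\<alpha> * (B + B\<^sup>2/2))"
    proof -
      have "0 \<le> B*(B*\<alpha>)" "0 \<le> B*(B*(B*\<alpha>))" using B al by (simp_all add: mult_nonneg_nonneg)
      then show ?thesis by (simp add: power2_eq_square power3_eq_cube algebra_simps)
    qed
    also have "\<dots> \<le> B * C" using CB B by (intro mult_left_mono) auto
    finally show ?thesis by simp
  qed
  define a where "a = A*C - \<alpha>*(A\<^sup>2/2 + A^3/6)"
  define b where "b = B*C - \<alpha>*(B\<^sup>2/2 + B^3/6)"
  have a0: "0 \<le> a" and b0: "0 \<le> b" using p1 p2 by (simp_all add: a_def b_def)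
  have e1: "ennreal (1 + a + b) = ennreal (1 + a) + ennreal b" using a0 b0 by (intro ennreal_plus) auto
  have e2: "ennreal (1 + a) = ennreal 1 + ennreal a" using a0 by (intro ennreal_plus) auto
  have "(\<integral>\<^sup>+ t. ennreal (G t) \<partial>unifP) = ennreal (1 + a + b)"
    unfolding e1 e2 eq a_def[symmetric] b_def[symmetric] by (simp add: add.assoc)
  then show ?thesis unfolding G_def f1_def f2_def a_def b_def .
qed



locale setting =
  fixes r :: "real \<Rightarrow> real" and xs rmax \<gamma> :: real
  assumes r_meas: "r \<in> borel_measurable borel"
    and r_nonneg: "\<forall>x\<in>{0..1}. r x \<ge> 0"
    and xs_in: "xs \<in> {0..1}"
    and r_up: "mono_on {0..xs} r"
    and r_down: "monotone_on {xs..1} (\<le>) (\<ge>) r"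
    and r_max: "rmax = r xs"
    and \<gamma>_in: "\<gamma> \<in> {0..1}"
begin

abbreviation "SS \<equiv> Sset r rmax \<gamma>"
definition "aS = Inf SS"
definition "bS = Sup SS"

lemma SS_borel[measurable]: "SS \<in> sets borel"
proof -
  have [measurable]: "r \<in> borel_measurable borel" by (rule r_meas)
  show ?thesis unfolding Sset_def by measurable
qed

lemma xs_S: "xs \<in> SS"
proof -
  have "0 \<le> rmax" using r_nonneg xs_in r_max by auto
  then have "\<gamma> * rmax \<le> rmax" using \<gamma>_in by (simp add: mult_left_le_one_le)
  then show ?thesis using xs_in r_max by (simp add: Sset_def)
qed

lemma S_sub: "SS \<subseteq> {0..1}" by (auto simp: Sset_def)

lemma S_bdd: "bdd_below SS" "bdd_above SS"
  using S_sub by (auto intro!: bdd_belowI[of _ 0] bdd_aboveI[of _ 1])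

lemma S_ne: "SS \<noteq> {}" using xs_S by auto

lemma a_props: "0 \<le> aS" "aS \<le> xs" "xs \<le> bS" "bS \<le> 1" "SS \<subseteq> {aS..bS}"
proof -
  show "0 \<le> aS" unfolding aS_def using S_ne S_sub by (intro cInf_greatest) auto
  show "aS \<le> xs" unfolding aS_def using S_bdd xs_S by (intro cInf_lower) auto
  show "xs \<le> bS" unfolding bS_def using S_bdd xs_S by (intro cSup_upper) auto
  show "bS \<le> 1" unfolding bS_def using S_ne S_sub by (intro cSup_least) auto
  show "SS \<subseteq> {aS..bS}" unfolding aS_def bS_def using S_bdd by (auto intro: cInf_lower cSup_upper)
qed

lemma miss_left:
  assumes "y \<in> {0..1}" "y \<le> xs" "y \<notin> SS" shows "y \<le> aS"
proof (rule ccontr)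
  assume "\<not> y \<le> aS"
  then have "Inf SS < y" by (simp add: aS_def)
  then obtain s where s: "s \<in> SS" "s < y" using cInf_less_iff[OF S_ne S_bdd(1)] by auto
  then have s01: "s \<in> {0..1}" using S_sub by auto
  have "r s \<le> r y" using r_up s01 assms s by (intro mono_onD[OF r_up]) auto
  then have "y \<in> SS" using s assms by (auto simp: Sset_def)
  then show False using assms by simp
qed

lemma miss_right:
  assumes "y \<in> {0..1}" "xs \<le> y" "y \<notin> SS" shows "bS \<le> y"
proof (rule ccontr)
  assume "\<not> bS \<le> y"
  then have "y < Sup SS" by (simp add: bS_def)
  then obtain s where s: "s \<in> SS" "y < s" using less_cSup_iff[OF S_ne S_bdd(2)] by auto
  then have s01: "s \<in> {0..1}" using S_sub by auto
  have "r s \<le> r y" using s01 assms s by (intro monotone_onD[OF r_down]) auto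
  then have "y \<in> SS" using s assms by (auto simp: Sset_def)
  then show False using assms by simp
qed

lemma width_props: "0 \<le> width r rmax \<gamma>" "width r rmax \<gamma> \<le> bS - aS"
proof -
  let ?W = "{\<delta> \<in> {0..1}. \<exists>z \<in> {0..1}. SS \<subseteq> {z..z+\<delta>}}"
  have mem: "bS - aS \<in> ?W"
  proof -
    have "SS \<subseteq> {aS..aS + (bS - aS)}" using a_props by simp
    moreover have "aS \<in> {0..1}" using a_props by auto
    ultimately have "\<exists>z\<in>{0..1}. SS \<subseteq> {z..z + (bS - aS)}" by blast
    then show ?thesis using a_props by auto
  qed
  have ne: "?W \<noteq> {}" using mem by blast
  show "0 \<le> width r rmax \<gamma>" unfolding width_def by (rule cInf_greatest[OF ne]) auto
  show "width r rmax \<gamma> \<le> bS - aS" unfolding width_def using mem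
    by (intro cInf_lower) (auto intro: bdd_belowI[of _ 0])
qed

definition "valid st \<longleftrightarrow> 0 \<le> fst st \<and> fst st \<le> aS \<and> bS \<le> snd st \<and> snd st \<le> 1"

end



context setting begin

definition "Dl = bS - aS"
definition "alp = 1 / ln (4/3 :: real)"
definition "FF L = alp * ln (L / Dl) + 6"

lemma alp_ge: "24/7 \<le> alp" using alpha_bound by (simp add: alp_def)
lemma alp_pos: "0 < alp" using alp_ge by simp

lemma key_bound:
  assumes D: "Dl > 0" and L: "0 < L" and t: "0 \<le> t" "t < 1" and le: "Dl \<le> L * (1 - t)"
  shows "FF (L * (1 - t)) \<le> alp * ln (L / Dl) + 6 - alp * (t + t\<^sup>2/2)" "6 \<le> FF (L * (1 - t))"
proof -
  have "ln (L * (1 - t) / Dl) = ln ((L / Dl) * (1 - t))" by simp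
  also have "\<dots> = ln (L / Dl) + ln (1 - t)" using D L t by (intro ln_mult_pos) auto
  finally have e: "ln (L * (1 - t) / Dl) = ln (L / Dl) + ln (1 - t)" .
  have "alp * ln (1 - t) \<le> alp * (- t - t\<^sup>2/2)"
    using ln_bound[OF t] alp_pos by (intro mult_left_mono) auto
  then show "FF (L * (1 - t)) \<le> alp * ln (L / Dl) + 6 - alp * (t + t\<^sup>2/2)"
    unfolding FF_def e by (simp add: algebra_simps)
  have "1 \<le> L * (1 - t) / Dl" using le D by simp
  then have "0 \<le> ln (L * (1 - t) / Dl)" by simp
  then show "6 \<le> FF (L * (1 - t))" unfolding FF_def using alp_pos by simp
qed

lemma main_ind:
  assumes D: "Dl > 0"
  shows "valid st \<Longrightarrow> (\<integral>\<^sup>+ v. ennreal (real (Tk xs SS k st v)) \<partial>AS_space) \<le> ennreal (FF (snd st - fst st))"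
proof (induction k arbitrary: st)
  case 0
  then show ?case by (simp add: Tk_def)
next
  case (Suc k)
  obtain l h where st: "st = (l, h)" by force
  have vl: "0 \<le> l" "l \<le> aS" "bS \<le> h" "h \<le> 1" using Suc.prems st by (auto simp: valid_def)
  define L where "L = h - l"
  have LD: "Dl \<le> L" using vl by (simp add: L_def Dl_def)
  have Lpos: "0 < L" using LD D by simp
  define A where "A = (aS - l) / L"
  define B where "B = (h - bS) / L"
  define C where "C = alp * ln (L / Dl) + 6"
  define G where "G t = 1 + indicator {0..A} t * (C - alp * (t + t\<^sup>2/2))
                        + indicator {1-B..1} t * (C - alp * ((1-t) + (1-t)\<^sup>2/2))" for t :: real
  have A0: "0 \<le> A" using vl Lpos by (simp add: A_def)
  have B0: "0 \<le> B" using vl Lpos by (simp add: B_def)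
  have AB: "A + B = 1 - Dl / L"
  proof -
    have "A + B = ((aS - l) + (h - bS)) / L" by (simp add: A_def B_def add_divide_distrib)
    also have "(aS - l) + (h - bS) = L - Dl" by (simp add: L_def Dl_def)
    also have "(L - Dl) / L = 1 - Dl / L" using Lpos by (simp add: diff_divide_distrib)
    finally show ?thesis .
  qed
  have dpos: "0 < Dl / L" using D Lpos by simp
  have A1: "A \<le> 1" and B1: "B \<le> 1" using AB A0 B0 dpos by linarith+
  have nn1: "0 \<le> C - alp * (t + t\<^sup>2/2)" if t: "t \<in> {0..A}" for t
  proof -
    have "L * A = aS - l" using Lpos by (simp add: A_def)
    moreover have "L * t \<le> L * A" using t Lpos by (intro mult_left_mono) auto
    ultimately have "Dl \<le> L * (1 - t)" using vl
      by (simp add: Dl_def L_def algebra_simps)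
    moreover have "t < 1" using t AB B0 dpos by auto
    ultimately show ?thesis using key_bound[OF D Lpos, of t] t by (simp add: C_def)
  qed
  have nn2: "0 \<le> C - alp * ((1-t) + (1-t)\<^sup>2/2)" if t: "t \<in> {1-B..1}" for t
  proof -
    have "L * B = h - bS" using Lpos by (simp add: B_def)
    moreover have "L * (1 - B) \<le> L * t" using t Lpos by (intro mult_left_mono) auto
    ultimately have "Dl \<le> L * (1 - (1 - t))" using vl
      by (simp add: Dl_def L_def algebra_simps)
    moreover have "1 - t < 1" using t AB A0 dpos by auto
    ultimately show ?thesis using key_bound[OF D Lpos, of "1 - t"] t by (simp add: C_def)
  qed
  have Gge: "1 \<le> G t" for t
  proof -
    have "0 \<le> indicator {0..A} t * (C - alp * (t + t\<^sup>2/2))" using nn1 by (simp add: indicator_def)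
    moreover have "0 \<le> indicator {1-B..1} t * (C - alp * ((1-t) + (1-t)\<^sup>2/2))" using nn2 by (simp add: indicator_def)
    ultimately show ?thesis by (simp add: G_def)
  qed
  interpret PA: prob_space AS_space by (rule prob_AS)
  have inner: "(\<integral>\<^sup>+ \<omega>. ennreal (real (Tk xs SS (Suc k) st (case_nat s \<omega>))) \<partial>AS_space) \<le> ennreal (G s)"
    if s: "s \<in> {0..1}" for s
  proof -
    define y where "y = l + L * s"
    have "0 \<le> L * s" using s Lpos by simp
    moreover have "L * s \<le> L" using s Lpos by (intro mult_left_le) auto
    ultimately have y01: "y \<in> {0..1}" "l \<le> y" "y \<le> h" using vl
      by (auto simp: y_def L_def)
    have eqT: "Tk xs SS (Suc k) st (case_nat s \<omega>) = 1 + (if y \<in> SS then 0 else Tk xs SS k (stp xs st s) \<omega>)" for \<omega>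
      by (simp add: Tk_Suc smp_def st y_def L_def)
    show ?thesis
    proof (cases "y \<in> SS")
      case True
      then have "(\<integral>\<^sup>+ \<omega>. ennreal (real (Tk xs SS (Suc k) st (case_nat s \<omega>))) \<partial>AS_space) = 1"
        by (simp add: eqT PA.emeasure_space_1)
      then show ?thesis using Gge[of s] by simp
    next
      case False
      have mT: "(\<lambda>\<omega>. ennreal (real (Tk xs SS k (stp xs st s) \<omega>))) \<in> borel_measurable AS_space"
        by (rule Tk_meas_enn[OF SS_borel])
      have "(\<integral>\<^sup>+ \<omega>. ennreal (real (Tk xs SS (Suc k) st (case_nat s \<omega>))) \<partial>AS_space)
          = (\<integral>\<^sup>+ \<omega>. 1 + ennreal (real (Tk xs SS k (stp xs st s) \<omega>)) \<partial>AS_space)"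
        using False by (intro nn_integral_cong) (simp add: eqT ennreal_plus)
      also have "\<dots> = 1 + (\<integral>\<^sup>+ \<omega>. ennreal (real (Tk xs SS k (stp xs st s) \<omega>)) \<partial>AS_space)"
        using mT by (subst nn_integral_add) (auto simp: PA.emeasure_space_1)
      finally have ieq: "(\<integral>\<^sup>+ \<omega>. ennreal (real (Tk xs SS (Suc k) st (case_nat s \<omega>))) \<partial>AS_space)
          = 1 + (\<integral>\<^sup>+ \<omega>. ennreal (real (Tk xs SS k (stp xs st s) \<omega>)) \<partial>AS_space)" .
      have yne: "y \<noteq> xs" using False xs_S by auto
      show ?thesis
      proof (cases "y \<le> xs")
        case True
        have ya: "y \<le> aS" using miss_left[OF y01(1) True False] .
        have stp_eq: "stp xs st s = (y, h)" using True yne y01 by (simp add: stp_def st y_def L_def)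
        have val: "valid (y, h)" using ya y01 vl by (simp add: valid_def)
        have IH: "(\<integral>\<^sup>+ \<omega>. ennreal (real (Tk xs SS k (stp xs st s) \<omega>)) \<partial>AS_space) \<le> ennreal (FF (h - y))"
          using Suc.IH[OF val] stp_eq by simp
        have sA: "s \<le> A" using ya Lpos by (simp add: A_def y_def field_simps)
        have hy: "h - y = L * (1 - s)" by (simp add: y_def L_def algebra_simps)
        have s1: "s < 1" using sA AB B0 dpos by auto
        have DL: "Dl \<le> L * (1 - s)" using hy ya vl by (simp add: Dl_def)
        have FFb: "FF (h - y) \<le> C - alp * (s + s\<^sup>2/2)" "0 \<le> FF (h - y)"
          using key_bound[OF D Lpos _ s1 DL] s unfolding hy C_def by auto
        have "0 \<le> indicator {1-B..1} s * (C - alp * ((1-s) + (1-s)\<^sup>2/2))" using nn2 by (simp add: indicator_def)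
        then have Gs: "1 + (C - alp * (s + s\<^sup>2/2)) \<le> G s" using sA s by (simp add: G_def)
        have "1 + (\<integral>\<^sup>+ \<omega>. ennreal (real (Tk xs SS k (stp xs st s) \<omega>)) \<partial>AS_space) \<le> 1 + ennreal (FF (h - y))"
          using IH by (rule add_left_mono)
        also have "\<dots> = ennreal (1 + FF (h - y))" using FFb by (simp add: ennreal_plus)
        also have "\<dots> \<le> ennreal (G s)" using FFb Gs by (intro ennreal_leI) linarith
        finally show ?thesis using ieq by simp
      next
        case False2: False
        have yb: "bS \<le> y" using miss_right[OF y01(1) _ False] False2 by simp
        have stp_eq: "stp xs st s = (l, y)" using False2 y01 by (simp add: stp_def st y_def L_def)
        have val: "valid (l, y)" using yb y01 vl by (simp add: valid_def)
        have IH: "(\<integral>\<^sup>+ \<omega>. ennreal (real (Tk xs SS k (stp xs st s) \<omega>)) \<partial>AS_space) \<le> ennreal (FF (y - l))"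
          using Suc.IH[OF val] stp_eq by simp
        have sB: "1 - B \<le> s" using yb Lpos by (simp add: B_def y_def L_def field_simps)
        have hy: "y - l = L * (1 - (1 - s))" by (simp add: y_def L_def algebra_simps)
        have s1: "1 - s < 1" using sB AB A0 dpos by auto
        have s0: "0 \<le> 1 - s" using s by simp
        have DL: "Dl \<le> L * (1 - (1 - s))" using hy yb vl by (simp add: Dl_def)
        have FFb: "FF (y - l) \<le> C - alp * ((1 - s) + (1 - s)\<^sup>2/2)" "0 \<le> FF (y - l)"
          using key_bound[OF D Lpos s0 s1 DL] unfolding hy C_def by auto
        have "0 \<le> indicator {0..A} s * (C - alp * (s + s\<^sup>2/2))" using nn1 by (simp add: indicator_def)
        then have Gs: "1 + (C - alp * ((1 - s) + (1 - s)\<^sup>2/2)) \<le> G s" using sB s by (simp add: G_def)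
        have "1 + (\<integral>\<^sup>+ \<omega>. ennreal (real (Tk xs SS k (stp xs st s) \<omega>)) \<partial>AS_space) \<le> 1 + ennreal (FF (y - l))"
          using IH by (rule add_left_mono)
        also have "\<dots> = ennreal (1 + FF (y - l))" using FFb by (simp add: ennreal_plus)
        also have "\<dots> \<le> ennreal (G s)" using FFb Gs by (intro ennreal_leI) linarith
        finally show ?thesis using ieq by simp
      qed
    qed
  qed
  have "(\<integral>\<^sup>+ v. ennreal (real (Tk xs SS (Suc k) st v)) \<partial>AS_space)
      = (\<integral>\<^sup>+ s. \<integral>\<^sup>+ \<omega>. ennreal (real (Tk xs SS (Suc k) st (case_nat s \<omega>))) \<partial>AS_space \<partial>unifP)"
    by (rule split_AS[OF Tk_meas_enn[OF SS_borel]])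
  also have "\<dots> \<le> (\<integral>\<^sup>+ s. ennreal (G s) \<partial>unifP)"
  proof (rule nn_integral_mono_AE)
    show "AE s in unifP. (\<integral>\<^sup>+ \<omega>. ennreal (real (Tk xs SS (Suc k) st (case_nat s \<omega>))) \<partial>AS_space) \<le> ennreal (G s)"
      unfolding unifP_def by (rule AE_uniform_measureI) (auto intro!: AE_I2 inner)
  qed
  also have "(\<integral>\<^sup>+ s. ennreal (G s) \<partial>unifP) = ennreal (1 + (A*C - alp*(A\<^sup>2/2 + A^3/6)) + (B*C - alp*(B\<^sup>2/2 + B^3/6)))"
    unfolding G_def by (rule G_int[OF A0 A1 B0 B1 _ nn1 nn2]) (use alp_pos in simp)
  also have "\<dots> \<le> ennreal C"
  proof (rule ennreal_leI)
    have P: "1 \<le> 6 * (Dl/L) + (24/7) * ((A\<^sup>2/2 + A^3/6) + (B\<^sup>2/2 + B^3/6))"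
      by (rule poly_ineq[OF A0 B0 AB dpos])
    have p0: "0 \<le> (A\<^sup>2/2 + A^3/6) + (B\<^sup>2/2 + B^3/6)" using A0 B0 by simp
    have "(24/7) * ((A\<^sup>2/2 + A^3/6) + (B\<^sup>2/2 + B^3/6)) \<le> alp * ((A\<^sup>2/2 + A^3/6) + (B\<^sup>2/2 + B^3/6))"
      using alp_ge p0 by (rule mult_right_mono)
    moreover have "6 \<le> C"
    proof -
      have "1 \<le> L / Dl" using LD D by simp
      then have "0 \<le> ln (L / Dl)" by simp
      then show ?thesis using alp_pos by (simp add: C_def)
    qed
    then have "6 * (Dl/L) \<le> C * (Dl/L)" using dpos by (intro mult_right_mono) auto
    moreover have "A*C + B*C = C - C * (Dl/L)"
    proof -
      have "A*C + B*C = (A + B) * C" by (simp add: algebra_simps)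
      also have "\<dots> = (1 - Dl/L) * C" using AB by simp
      finally show ?thesis by (simp add: algebra_simps)
    qed
    ultimately show "1 + (A*C - alp*(A\<^sup>2/2 + A^3/6)) + (B*C - alp*(B\<^sup>2/2 + B^3/6)) \<le> C"
      using P by (simp add: algebra_simps)
  qed
  also have "C = FF (snd st - fst st)" by (simp add: C_def FF_def st L_def)
  finally show ?case .
qed

end



lemma shift_meas: "(\<lambda>u i. u (Suc i)) \<in> measurable AS_space AS_space"
  unfolding AS_space_def
proof (rule measurable_PiM_single')
  fix i :: nat
  show "(\<lambda>u. u (Suc i)) \<in> measurable (Pi\<^sub>M UNIV (\<lambda>_. unifP)) unifP"
    by (rule measurable_component_singleton) simp
qed (auto simp: space_PiM)

lemma shift_int:
  assumes g[measurable]: "g \<in> borel_measurable AS_space"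
  shows "(\<integral>\<^sup>+ u. g (\<lambda>i. u (Suc i)) \<partial>AS_space) = (\<integral>\<^sup>+ v. g v \<partial>AS_space)"
proof -
  interpret PA: prob_space AS_space by (rule prob_AS)
  interpret U: prob_space unifP by (rule prob_unifP)
  have m: "(\<lambda>u. g (\<lambda>i. u (Suc i))) \<in> borel_measurable AS_space"
    using measurable_comp[OF shift_meas g] by (simp add: comp_def)
  have "(\<integral>\<^sup>+ u. g (\<lambda>i. u (Suc i)) \<partial>AS_space) = (\<integral>\<^sup>+ s. \<integral>\<^sup>+ \<omega>. g (\<lambda>i. case_nat s \<omega> (Suc i)) \<partial>AS_space \<partial>unifP)"
    by (rule split_AS[OF m])
  also have "\<dots> = (\<integral>\<^sup>+ s. (\<integral>\<^sup>+ v. g v \<partial>AS_space) \<partial>unifP)"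
    by simp
  also have "\<dots> = (\<integral>\<^sup>+ v. g v \<partial>AS_space)"
  proof -
    have "emeasure unifP UNIV = 1" using U.emeasure_space_1 by simp
    then show ?thesis by simp
  qed
  finally show ?thesis .
qed

context setting begin

lemma Nhit_le: "Nhit xs SS u \<le> (SUP k. ennreal (real (Tk xs SS k (0,1) (\<lambda>i. u (Suc i)))))"
proof (cases "\<exists>n\<ge>1. AS_X xs u n \<in> SS")
  case True
  define m where "m = (LEAST n. n \<ge> 1 \<and> AS_X xs u n \<in> SS)"
  have "Tk xs SS m (0,1) (\<lambda>i. u (Suc i)) = m"
  proof (rule Tk_full)
    fix j assume "Suc j < m"
    then have "\<not> (Suc j \<ge> 1 \<and> AS_X xs u (Suc j) \<in> SS)" unfolding m_def by (rule not_less_Least)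
    then show "smp xs (0, 1) (\<lambda>i. u (Suc i)) j \<notin> SS" by (simp add: AS_X_smp)
  qed
  then have "Nhit xs SS u = ennreal (real (Tk xs SS m (0,1) (\<lambda>i. u (Suc i))))"
    using True by (simp add: Nhit_def m_def ennreal_of_nat_eq_real_of_nat)
  also have "\<dots> \<le> (SUP k. ennreal (real (Tk xs SS k (0,1) (\<lambda>i. u (Suc i)))))"
    by (rule SUP_upper) simp
  finally show ?thesis .
next
  case False
  have "\<And>k. Tk xs SS k (0,1) (\<lambda>i. u (Suc i)) = k"
  proof (rule Tk_full)
    fix k j
    show "smp xs (0, 1) (\<lambda>i. u (Suc i)) j \<notin> SS" using False by (auto simp: AS_X_smp[symmetric])
  qed
  then have "(SUP k. ennreal (real (Tk xs SS k (0,1) (\<lambda>i. u (Suc i))))) = (SUP k. of_nat k :: ennreal)"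
    by (simp add: ennreal_of_nat_eq_real_of_nat)
  also have "\<dots> = \<infinity>" using ennreal_SUP_of_nat_eq_top by simp
  finally have e: "(SUP k. ennreal (real (Tk xs SS k (0,1) (\<lambda>i. u (Suc i))))) = \<infinity>" .
  show ?thesis unfolding e by simp
qed

lemma final_bound:
  assumes D: "Dl > 0"
  shows "(\<integral>\<^sup>+ u. Nhit xs SS u \<partial>AS_space) \<le> ennreal (FF 1)"
proof -
  have mk: "\<And>k. (\<lambda>u. ennreal (real (Tk xs SS k (0,1) (\<lambda>i. u (Suc i))))) \<in> borel_measurable AS_space"
    using measurable_comp[OF shift_meas Tk_meas_enn[OF SS_borel]] by (simp add: comp_def)
  have inc: "incseq (\<lambda>k u. ennreal (real (Tk xs SS k (0,1) (\<lambda>i. u (Suc i)))))"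
    by (intro incseq_SucI le_funI ennreal_leI) (simp add: Tk_mono)
  have "(\<integral>\<^sup>+ u. Nhit xs SS u \<partial>AS_space) \<le> (\<integral>\<^sup>+ u. (SUP k. ennreal (real (Tk xs SS k (0,1) (\<lambda>i. u (Suc i))))) \<partial>AS_space)"
    by (intro nn_integral_mono Nhit_le)
  also have "\<dots> = (SUP k. \<integral>\<^sup>+ u. ennreal (real (Tk xs SS k (0,1) (\<lambda>i. u (Suc i)))) \<partial>AS_space)"
    using nn_integral_monotone_convergence_SUP[OF inc mk] by (simp add: image_comp)
  also have "\<dots> = (SUP k. \<integral>\<^sup>+ v. ennreal (real (Tk xs SS k (0,1) v)) \<partial>AS_space)"
    by (simp add: shift_int[OF Tk_meas_enn[OF SS_borel]])
  also have "\<dots> \<le> ennreal (FF 1)"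
  proof (rule SUP_least)
    fix k
    have "valid (0,1)" using a_props by (simp add: valid_def)
    then show "(\<integral>\<^sup>+ v. ennreal (real (Tk xs SS k (0,1) v)) \<partial>AS_space) \<le> ennreal (FF 1)"
      using main_ind[OF D] by fastforce
  qed
  finally show ?thesis .
qed

end


theorem mainTheorem5:
  fixes r :: "real \<Rightarrow> real" and Q :: "real measure" and xs rmax \<gamma> :: real
  assumes Q_prob: "prob_space Q"
    and Q_dens: "Q = density unifP (\<lambda>x. ennreal (r x))"
    and r_meas: "r \<in> borel_measurable borel"
    and r_nonneg: "\<forall>x\<in>{0..1}. r x \<ge> 0"
    and xs_in: "xs \<in> {0..1}"
    and r_up: "mono_on {0..xs} r"
    and r_down: "monotone_on {xs..1} (\<le>) (\<ge>) r"
    and r_max: "rmax = r xs"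
    and \<gamma>_in: "\<gamma> \<in> {0..1}"
  shows "(\<integral>\<^sup>+ u. Nhit xs (Sset r rmax \<gamma>) u \<partial>AS_space)
           \<le> (if width r rmax \<gamma> = 0 then \<infinity>
              else ennreal ((1 / ln (4/3)) * ln (1 / width r rmax \<gamma>) + 6))"
proof -
  interpret S: setting r xs rmax \<gamma>
    using r_meas r_nonneg xs_in r_up r_down r_max \<gamma>_in by (simp add: setting_def)
  show ?thesis
  proof (cases "width r rmax \<gamma> = 0")
    case True
    then show ?thesis by simp
  next
    case False
    have w0: "0 < width r rmax \<gamma>" using S.width_props(1) False by simp
    have wD: "width r rmax \<gamma> \<le> S.Dl" using S.width_props(2) by (simp add: S.Dl_def)
    have Dpos: "0 < S.Dl" using w0 wD by simp
    have "(\<integral>\<^sup>+ u. Nhit xs (Sset r rmax \<gamma>) u \<partial>AS_space) \<le> ennreal (S.FF 1)"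
      by (rule S.final_bound[OF Dpos])
    also have "\<dots> \<le> ennreal ((1 / ln (4/3)) * ln (1 / width r rmax \<gamma>) + 6)"
    proof (rule ennreal_leI)
      have "1 / S.Dl \<le> 1 / width r rmax \<gamma>" using w0 wD by (intro divide_left_mono) auto
      then have "ln (1 / S.Dl) \<le> ln (1 / width r rmax \<gamma>)" using Dpos w0 by simp
      then have "S.alp * ln (1 / S.Dl) \<le> S.alp * ln (1 / width r rmax \<gamma>)"
        using S.alp_pos by (intro mult_left_mono) auto
      then show "S.FF 1 \<le> (1 / ln (4/3)) * ln (1 / width r rmax \<gamma>) + 6"
        by (simp add: S.FF_def S.alp_def)
    qed
    finally show ?thesis using False by simp
  qed
qed

end
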